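(* Let $A$ be a unital algebra over a field $F$ with $\operatorname{char}(F)\neq2$, and let $\mathcal{A}=M_n(A)$, $n\ge 2$, be the algebra of $n\times n$ matrices over $A$. Then $\operatorname{QJCent}(\mathcal{A})=\operatorname{Cent}(\mathcal{A})$.
   Context: $x\circ y=xy+yx$. $\operatorname{QJCent}(\mathcal{A})$: linear $f:\mathcal{A}\to\mathcal{A}$ with $f(x)\circ y=x\circ f(y)$ for all $x,y\in\mathcal{A}$. $\operatorname{Cent}(\mathcal{A})$: linear $f$ with $f(xy)=f(x)y=xf(y)$ for all $x,y$. *)

theory Defs
  imports "HOL-Analysis.Analysis"
begin

text \<open>A unital (associative) algebra over a field 'k: a type 'a of class ring_1
  together with a scalar multiplication making it a 'k-vector space, compatible
  with the ring multiplication.\<close>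
definition unital_algebra :: "('k::field \<Rightarrow> 'a::ring_1 \<Rightarrow> 'a) \<Rightarrow> bool" where
  "unital_algebra sc \<longleftrightarrow> vector_space sc \<and>
     (\<forall>c x y. sc c (x * y) = sc c x * y \<and> sc c (x * y) = x * sc c y)"

text \<open>Entrywise scalar multiplication on n x n matrices over 'a.\<close>
definition mat_scale :: "('k \<Rightarrow> 'a \<Rightarrow> 'a) \<Rightarrow> 'k \<Rightarrow> 'a^'n^'n \<Rightarrow> 'a^'n^'n" where
  "mat_scale sc c M = (\<chi> i j. sc c (M $ i $ j))"

text \<open>Jordan product x o y = xy + yx.\<close>
definition jordan :: "('b \<Rightarrow> 'b \<Rightarrow> 'b) \<Rightarrow> 'b \<Rightarrow> 'b \<Rightarrow> 'b::plus" where
  "jordan mul x y = mul x y + mul y x"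

definition QJCent :: "('k::field \<Rightarrow> 'b::ab_group_add \<Rightarrow> 'b) \<Rightarrow> ('b \<Rightarrow> 'b \<Rightarrow> 'b) \<Rightarrow> ('b \<Rightarrow> 'b) set" where
  "QJCent sc mul = {f. Vector_Spaces.linear sc sc f \<and>
      (\<forall>x y. jordan mul (f x) y = jordan mul x (f y))}"

definition Cent :: "('k::field \<Rightarrow> 'b::ab_group_add \<Rightarrow> 'b) \<Rightarrow> ('b \<Rightarrow> 'b \<Rightarrow> 'b) \<Rightarrow> ('b \<Rightarrow> 'b) set" where
  "Cent sc mul = {f. Vector_Spaces.linear sc sc f \<and>
      (\<forall>x y. f (mul x y) = mul (f x) y \<and> mul (f x) y = mul x (f y))}"

end

theory Submission
  imports Defs
begin

lemma mm_rdistrib: "((B::'a::semiring_1^'n^'m) + C) ** A = B ** A + C ** A"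
  by (vector matrix_matrix_mult_def sum.distrib[symmetric] field_simps)

definition EE :: "'n \<Rightarrow> 'n \<Rightarrow> 'a::semiring_1 \<Rightarrow> 'a^'n^'n" where
  "EE i j a = (\<chi> p q. if p = i \<and> q = j then a else 0)"

lemma EE_mult_left: "((c::'a::semiring_1^'n^'n) ** EE i j a) $ p $ q = (if q = j then c$p$i * a else 0)"
  by (simp add: matrix_matrix_mult_def EE_def if_distrib if_distribR sum.delta' cong: if_cong)

lemma EE_mult_right: "(EE i j a ** (c::'a::semiring_1^'n^'n)) $ p $ q = (if p = i then a * c$j$q else 0)"
  by (simp add: matrix_matrix_mult_def EE_def if_distrib if_distribR sum.delta' cong: if_cong)

lemma EE_EE: "EE i j a ** EE k l b = (if j = k then EE i l (a * b) else (0::'a::semiring_1^'n^'n))"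
  by (simp add: EE_mult_left vec_eq_iff) (auto simp: EE_def)

lemma half_cancel:
  fixes sc :: "'k::field \<Rightarrow> 'a::ring_1 \<Rightarrow> 'a" and a b :: 'a
  assumes "unital_algebra sc" and "(2::'k) \<noteq> 0" and "a + a = b + b"
  shows "a = b"
proof -
  interpret vector_space sc using assms(1) unfolding unital_algebra_def by blast
  have h: "x = sc (1/2) (x + x)" for x
  proof -
    have e: "1/2 + 1/2 = (1::'k)" using assms(2) by (simp add: field_simps)
    have "x = sc (1/2 + 1/2) x" by (simp only: e scale_one)
    also have "\<dots> = sc (1/2) (x + x)" by (simp only: scale_left_distrib scale_right_distrib)
    finally show ?thesis .
  qed
  show ?thesis using h[of a] h[of b] assms(3) by simp
qed

lemma central_diag:
  fixes c :: "'a::ring_1^'n^'n"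
  assumes card: "CARD('n) \<ge> 2"
    and comm: "\<And>i j a. i \<noteq> j \<Longrightarrow> c ** EE i j a = EE i j a ** c"
  shows "c ** M = M ** c"
proof -
  have other: "\<exists>j. j \<noteq> i" for i :: 'n
  proof (rule ccontr)
    assume "\<not> ?thesis"
    then have "UNIV = {i}" by auto
    then have "CARD('n) = 1" by (metis card.empty card_insert_disjoint empty_iff finite.emptyI One_nat_def)
    then show False using card by simp
  qed
  have E: "(if q = j then c$p$i * a else 0) = (if p = i then a * c$j$q else 0)"
    if "i \<noteq> j" for i j p q a
    using arg_cong[OF comm[OF that, of a], of "\<lambda>M. M $ p $ q"]
    by (simp add: EE_mult_left EE_mult_right)
  have off: "c$p$i = 0" if "p \<noteq> i" for p i
  proof -
    obtain j where "i \<noteq> j" using other by metis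
    from E[OF this, where p=p and q=j and a=1] that show ?thesis by simp
  qed
  have diag: "c$i$i * a = a * c$j$j" if "i \<noteq> j" for i j a
    using E[OF that, where p=i and q=j and a=a] by simp
  have diag1: "c$i$i = c$j$j" for i j
    using diag[of i j 1] by (cases "i = j") auto
  have cen: "c$i$i * a = a * c$j$j" for i j a
  proof -
    obtain k where k: "k \<noteq> i" using other by blast
    have "c$i$i * a = a * c$k$k" using diag[OF k[symmetric]] by simp
    then show ?thesis using diag1[of k j] by simp
  qed
  have l: "(c ** M) $ p $ q = c$p$p * M$p$q" for p q
  proof -
    have "(c ** M) $ p $ q = (\<Sum>k\<in>UNIV. c$p$k * M$k$q)" by (simp add: matrix_matrix_mult_def)
    also have "\<dots> = (\<Sum>k\<in>UNIV. if k = p then c$p$p * M$p$q else 0)"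
      by (rule sum.cong) (auto simp: off)
    finally show ?thesis by simp
  qed
  have r: "(M ** c) $ p $ q = M$p$q * c$q$q" for p q
  proof -
    have "(M ** c) $ p $ q = (\<Sum>k\<in>UNIV. M$p$k * c$k$q)" by (simp add: matrix_matrix_mult_def)
    also have "\<dots> = (\<Sum>k\<in>UNIV. if k = q then M$p$q * c$q$q else 0)"
      by (rule sum.cong) (auto simp: off)
    finally show ?thesis by simp
  qed
  show ?thesis by (simp add: vec_eq_iff l r cen)
qed

theorem proposition3p4:
  fixes sc :: "'k::field \<Rightarrow> 'a::ring_1 \<Rightarrow> 'a"
  assumes "unital_algebra sc"
    and "(2::'k) \<noteq> 0"
    and "CARD('n::finite) \<ge> 2"
  shows "QJCent (mat_scale sc :: 'k \<Rightarrow> 'a^'n^'n \<Rightarrow> 'a^'n^'n) (**)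
         = Cent (mat_scale sc :: 'k \<Rightarrow> 'a^'n^'n \<Rightarrow> 'a^'n^'n) (**)"
proof
  show "Cent (mat_scale sc :: 'k \<Rightarrow> 'a^'n^'n \<Rightarrow> 'a^'n^'n) (**)
     \<subseteq> QJCent (mat_scale sc :: 'k \<Rightarrow> 'a^'n^'n \<Rightarrow> 'a^'n^'n) (**)"
    unfolding Cent_def QJCent_def jordan_def by auto
next
  show "QJCent (mat_scale sc :: 'k \<Rightarrow> 'a^'n^'n \<Rightarrow> 'a^'n^'n) (**)
     \<subseteq> Cent (mat_scale sc :: 'k \<Rightarrow> 'a^'n^'n \<Rightarrow> 'a^'n^'n) (**)"
  proof
    fix f :: "'a^'n^'n \<Rightarrow> 'a^'n^'n"
    assume "f \<in> QJCent (mat_scale sc) (**)"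
    then have lin: "Vector_Spaces.linear (mat_scale sc) (mat_scale sc) f"
      and H: "\<And>x y. f x ** y + y ** f x = x ** f y + f y ** x"
      unfolding QJCent_def jordan_def by auto
    define c where "c = f (mat 1)"
    have G: "f x + f x = x ** c + c ** x" for x
      using H[of x "mat 1"] by (simp add: c_def)
    have K: "c ** (x ** y) + (y ** x) ** c = (x ** y) ** c + c ** (y ** x)" for x y
    proof -
      have "(f x + f x) ** y + y ** (f x + f x) = x ** (f y + f y) + (f y + f y) ** x"
        using H[of x y] by (simp add: mm_rdistrib matrix_add_ldistrib algebra_simps)
      then have "(x ** c + c ** x) ** y + y ** (x ** c + c ** x)
          = x ** (y ** c + c ** y) + (y ** c + c ** y) ** x"
        by (simp add: G)
      then show ?thesis
        by (simp add: mm_rdistrib matrix_add_ldistrib matrix_mul_assoc algebra_simps)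
    qed
    have comm: "c ** EE i j a = EE i j a ** c" if "i \<noteq> j" for i j a
      using K[of "EE i i a" "EE i j 1"] that by (simp add: EE_EE)
    have cen: "c ** M = M ** c" for M
      using central_diag[OF assms(3) comm] by blast
    have fx: "f x = x ** c" for x
    proof -
      have "(f x) $ p $ q + (f x) $ p $ q = (x ** c) $ p $ q + (x ** c) $ p $ q" for p q
        using arg_cong[OF G[of x], of "\<lambda>M. M $ p $ q"] by (simp add: cen)
      then show ?thesis using half_cancel[OF assms(1) assms(2)] by (metis vec_eq_iff)
    qed
    show "f \<in> Cent (mat_scale sc) (**)"
      unfolding Cent_def using lin
      by (simp add: fx matrix_mul_assoc[symmetric] cen)
  qed
qed

end
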